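(* Let $u:\mathbb{R}^n\to\mathbb{R}$ be a smooth function and let $M$ be its (entire) graph in $\mathbb{R}^{n+1}$. Assume its mean curvature $H=-\operatorname{div}\big(Du/\sqrt{1+|Du|^2}\big)$ is non-positive on $\mathbb{R}^n$. Then there is a constant $C>0$ such that $\operatorname{vol}(B_R\cap M)\le CR^n$, where $B_R=\{X\in\mathbb{R}^{n+1}:|X|<R\}$. Furthermore, if such a graph $M$ is a translating soliton, i.e. $H=\langle\nu,a\rangle$ for a fixed unit vector $a\in\mathbb{R}^{n+1}$ with $\nu=(-Du,1)/\sqrt{1+|Du|^2}$, then, with $S(X)=\langle X,a\rangle$ on $M$, either $\inf_M S=-\infty$ or $\sup_M S=\infty$.
   Context: Volume on $M$ is the induced $n$-dimensional Riemannian volume; $Du$ is the Euclidean gradient of $u$. *)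

theory Defs
  imports "HOL-Analysis.Analysis"
begin

fun C_k :: "nat \<Rightarrow> ('a::euclidean_space \<Rightarrow> real) \<Rightarrow> bool" where
  "C_k 0 f = continuous_on UNIV f"
| "C_k (Suc k) f = (f differentiable_on UNIV \<and> continuous_on UNIV f \<and>
      (\<forall>i\<in>Basis. C_k k (\<lambda>x. frechet_derivative f (at x) i)))"

definition smooth_fun :: "('a::euclidean_space \<Rightarrow> real) \<Rightarrow> bool" where
  "smooth_fun f \<longleftrightarrow> (\<forall>k. C_k k f)"

definition grad :: "('a::euclidean_space \<Rightarrow> real) \<Rightarrow> 'a \<Rightarrow> 'a" where
  "grad u x = (\<Sum>i\<in>Basis. frechet_derivative u (at x) i *\<^sub>R i)"

definition divergence :: "('a::euclidean_space \<Rightarrow> 'a) \<Rightarrow> 'a \<Rightarrow> real" where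
  "divergence F x = (\<Sum>i\<in>Basis. frechet_derivative F (at x) i \<bullet> i)"

definition mean_curv :: "('a::euclidean_space \<Rightarrow> real) \<Rightarrow> 'a \<Rightarrow> real" where
  "mean_curv u x = - divergence (\<lambda>y. (1 / sqrt (1 + (norm (grad u y))\<^sup>2)) *\<^sub>R grad u y) x"

definition graph_normal :: "('a::euclidean_space \<Rightarrow> real) \<Rightarrow> 'a \<Rightarrow> 'a \<times> real" where
  "graph_normal u x = (1 / sqrt (1 + (norm (grad u x))\<^sup>2)) *\<^sub>R (- grad u x, 1)"

definition graph :: "('a::euclidean_space \<Rightarrow> real) \<Rightarrow> ('a \<times> real) set" where
  "graph u = {(x, u x) | x. True}"

text \<open>Induced n-dimensional Riemannian volume of (graph u) \<inter> A, via the area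
  formula for graphs: integral over {x. (x,u x) \<in> A} of sqrt(1+|Du|^2).\<close>
definition graph_vol :: "('a::euclidean_space \<Rightarrow> real) \<Rightarrow> ('a \<times> real) set \<Rightarrow> ennreal" where
  "graph_vol u A = (\<integral>\<^sup>+ x. indicator {x. (x, u x) \<in> A} x * ennreal (sqrt (1 + (norm (grad u x))\<^sup>2)) \<partial>lborel)"

end

theory Submission
  imports Defs
begin

definition C1 :: "('a::real_normed_vector \<Rightarrow> 'b::real_normed_vector) \<Rightarrow> ('a \<Rightarrow> 'a \<Rightarrow> 'b) \<Rightarrow> bool" where
  "C1 f f' \<longleftrightarrow> (\<forall>x. (f has_derivative f' x) (at x)) \<and> (\<forall>h. continuous_on UNIV (\<lambda>x. f' x h))"

lemma C1_cont: "C1 f f' \<Longrightarrow> continuous_on UNIV f"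
  unfolding C1_def
  by (meson continuous_at_imp_continuous_on has_derivative_continuous)

lemma C1_der: "C1 f f' \<Longrightarrow> (f has_derivative f' x) (at x)"
  unfolding C1_def by blast

lemma C1_dcont: "C1 f f' \<Longrightarrow> continuous_on UNIV (\<lambda>x. f' x h)"
  unfolding C1_def by blast

lemma C1I: "(\<And>x. (f has_derivative f' x) (at x)) \<Longrightarrow> (\<And>h. continuous_on UNIV (\<lambda>x. f' x h)) \<Longrightarrow> C1 f f'"
  unfolding C1_def by blast

lemma C1_scaleR:
  fixes f :: "'a::real_normed_vector \<Rightarrow> real" and g :: "'a \<Rightarrow> 'b::real_normed_vector"
  assumes f: "C1 f f'" and g: "C1 g g'"
  shows "C1 (\<lambda>x. f x *\<^sub>R g x) (\<lambda>x h. f x *\<^sub>R g' x h + f' x h *\<^sub>R g x)"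
proof (rule C1I)
  show "((\<lambda>x. f x *\<^sub>R g x) has_derivative (\<lambda>h. f x *\<^sub>R g' x h + f' x h *\<^sub>R g x)) (at x)" for x
    by (rule has_derivative_scaleR[OF C1_der[OF f] C1_der[OF g]])
  show "continuous_on UNIV (\<lambda>x. f x *\<^sub>R g' x h + f' x h *\<^sub>R g x)" for h
    by (intro continuous_intros C1_cont[OF f] C1_cont[OF g] C1_dcont[OF f] C1_dcont[OF g])
qed

lemma C1_inner:
  fixes f g :: "'a::real_normed_vector \<Rightarrow> 'b::real_inner"
  assumes f: "C1 f f'" and g: "C1 g g'"
  shows "C1 (\<lambda>x. f x \<bullet> g x) (\<lambda>x h. f x \<bullet> g' x h + f' x h \<bullet> g x)"
proof (rule C1I)
  show "((\<lambda>x. f x \<bullet> g x) has_derivative (\<lambda>h. f x \<bullet> g' x h + f' x h \<bullet> g x)) (at x)" for x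
    by (rule has_derivative_inner[OF C1_der[OF f] C1_der[OF g]])
  show "continuous_on UNIV (\<lambda>x. f x \<bullet> g' x h + f' x h \<bullet> g x)" for h
    by (intro continuous_intros C1_cont[OF f] C1_cont[OF g] C1_dcont[OF f] C1_dcont[OF g])
qed

lemma C1_scaleR_const:
  fixes f :: "'a::real_normed_vector \<Rightarrow> real"
  assumes f: "C1 f f'"
  shows "C1 (\<lambda>x. f x *\<^sub>R c) (\<lambda>x h. f' x h *\<^sub>R c)"
proof (rule C1I)
  show "((\<lambda>x. f x *\<^sub>R c) has_derivative (\<lambda>h. f' x h *\<^sub>R c)) (at x)" for x
    by (rule has_derivative_scaleR_left[OF C1_der[OF f]])
  show "continuous_on UNIV (\<lambda>x. f' x h *\<^sub>R c)" for h
    by (intro continuous_intros C1_dcont[OF f])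
qed

lemma C1_sum:
  fixes f :: "'i \<Rightarrow> 'a::real_normed_vector \<Rightarrow> 'b::real_normed_vector"
  assumes "finite I" "\<And>i. i \<in> I \<Longrightarrow> C1 (f i) (f' i)"
  shows "C1 (\<lambda>x. \<Sum>i\<in>I. f i x) (\<lambda>x h. \<Sum>i\<in>I. f' i x h)"
proof (rule C1I)
  show "((\<lambda>x. \<Sum>i\<in>I. f i x) has_derivative (\<lambda>h. \<Sum>i\<in>I. f' i x h)) (at x)" for x
    by (rule has_derivative_sum) (use assms C1_der in blast)
  show "continuous_on UNIV (\<lambda>x. \<Sum>i\<in>I. f' i x h)" for h
    by (rule continuous_on_sum) (use assms C1_dcont in blast)
qed

lemma C1_add:
  assumes f: "C1 f f'" and g: "C1 g g'"
  shows "C1 (\<lambda>x. f x + g x) (\<lambda>x h. f' x h + g' x h)"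
proof (rule C1I)
  show "((\<lambda>x. f x + g x) has_derivative (\<lambda>h. f' x h + g' x h)) (at x)" for x
    by (rule has_derivative_add[OF C1_der[OF f] C1_der[OF g]])
  show "continuous_on UNIV (\<lambda>x. f' x h + g' x h)" for h
    by (intro continuous_intros C1_dcont[OF f] C1_dcont[OF g])
qed

lemma C1_const: "C1 (\<lambda>x. c) (\<lambda>x h. 0)"
  by (rule C1I) (auto intro: derivative_eq_intros continuous_intros)

lemma C1_uminus:
  assumes f: "C1 f f'"
  shows "C1 (\<lambda>x. - f x) (\<lambda>x h. - f' x h)"
proof (rule C1I)
  show "((\<lambda>x. - f x) has_derivative (\<lambda>h. - f' x h)) (at x)" for x
    by (rule has_derivative_minus[OF C1_der[OF f]])
  show "continuous_on UNIV (\<lambda>x. - f' x h)" for h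
    by (intro continuous_intros C1_dcont[OF f])
qed

lemma C1_inner_const: "C1 (\<lambda>x. x \<bullet> c) (\<lambda>x h. h \<bullet> c)"
  by (rule C1I) (auto intro: bounded_linear.has_derivative[OF bounded_linear_inner_left] has_derivative_ident continuous_intros)

lemma C1_comp:
  fixes f :: "'a::real_normed_vector \<Rightarrow> real"
  assumes f: "C1 f f'"
    and phi: "\<And>x. (\<phi> has_real_derivative \<phi>d (f x)) (at (f x))"
    and cphi: "continuous_on UNIV (\<lambda>x. \<phi>d (f x))"
  shows "C1 (\<lambda>x. \<phi> (f x)) (\<lambda>x h. \<phi>d (f x) * f' x h)"
proof (rule C1I)
  show "((\<lambda>x. \<phi> (f x)) has_derivative (\<lambda>h. \<phi>d (f x) * f' x h)) (at x)" for x
    using has_derivative_compose[OF C1_der[OF f] phi[of x, unfolded has_field_derivative_def]] .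
  show "continuous_on UNIV (\<lambda>x. \<phi>d (f x) * f' x h)" for h
    by (intro continuous_intros C1_dcont[OF f] cphi)
qed

lemma linear_expand:
  fixes L :: "'a::euclidean_space \<Rightarrow> real"
  assumes "linear L"
  shows "L h = (\<Sum>j\<in>Basis. (h \<bullet> j) * L j)"
  using Linear_Algebra.linear_componentwise[OF assms, of h 1] by simp

lemma C1_frechet:
  fixes f :: "'a::euclidean_space \<Rightarrow> real"
  assumes d: "f differentiable_on UNIV"
    and c: "\<And>j. j \<in> Basis \<Longrightarrow> continuous_on UNIV (\<lambda>x. frechet_derivative f (at x) j)"
  shows "C1 f (\<lambda>x. frechet_derivative f (at x))"
proof (rule C1I)
  have dx: "(f has_derivative frechet_derivative f (at x)) (at x)" for x
    using d frechet_derivative_works unfolding differentiable_on_def by auto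
  then show "(f has_derivative frechet_derivative f (at x)) (at x)" for x .
  show "continuous_on UNIV (\<lambda>x. frechet_derivative f (at x) h)" for h
  proof -
    have eq: "(\<lambda>x. frechet_derivative f (at x) h) = (\<lambda>x. \<Sum>j\<in>Basis. (h \<bullet> j) * frechet_derivative f (at x) j)"
      by (rule ext, rule linear_expand, rule has_derivative_linear[OF dx])
    show ?thesis
      by (subst eq) (intro continuous_on_sum continuous_intros c)
  qed
qed

definition bx :: "real \<Rightarrow> real \<Rightarrow> real \<Rightarrow> 'a::euclidean_space \<Rightarrow> 'a set" where
  "bx R s t i = cbox (-(R *\<^sub>R One) + s *\<^sub>R i) (R *\<^sub>R One + t *\<^sub>R i)"

lemma corner_inner:
  fixes i j :: "'a::euclidean_space"
  assumes "j \<in> Basis"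
  shows "(-(R *\<^sub>R One) + s *\<^sub>R i) \<bullet> j = -R + s * (i \<bullet> j)"
    and "(R *\<^sub>R One + s *\<^sub>R i) \<bullet> j = R + s * (i \<bullet> j)"
    and "(s *\<^sub>R i - R *\<^sub>R One) \<bullet> j = s * (i \<bullet> j) - R"
  using assms by (simp_all add: inner_add_left inner_diff_left inner_minus_left inner_sum_Basis)

lemma mem_bx:
  assumes i: "i \<in> Basis"
  shows "x \<in> bx R s t i \<longleftrightarrow> (\<forall>j\<in>Basis. j \<noteq> i \<longrightarrow> -R \<le> x \<bullet> j \<and> x \<bullet> j \<le> R) \<and> -R + s \<le> x \<bullet> i \<and> x \<bullet> i \<le> R + t"
proof -
  have "x \<in> bx R s t i \<longleftrightarrow> (\<forall>j\<in>Basis. -R + s * (i \<bullet> j) \<le> x \<bullet> j \<and> x \<bullet> j \<le> R + t * (i \<bullet> j))"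
    unfolding bx_def mem_box by (simp add: corner_inner)
  also have "\<dots> \<longleftrightarrow> (\<forall>j\<in>Basis. j \<noteq> i \<longrightarrow> -R \<le> x \<bullet> j \<and> x \<bullet> j \<le> R) \<and> -R + s \<le> x \<bullet> i \<and> x \<bullet> i \<le> R + t"
    using i by (auto simp: inner_Basis)
  finally show ?thesis .
qed

lemma bx00: "bx R 0 0 i = cbox (-(R *\<^sub>R One)) (R *\<^sub>R One)"
  by (simp add: bx_def)

lemma content_bx:
  fixes i :: "'a::euclidean_space"
  assumes i: "i \<in> Basis" and R: "R \<ge> 0" and st: "0 \<le> 2*R + t - s"
  shows "Henstock_Kurzweil_Integration.content (bx R s t i) = (2*R + t - s) * (2*R)^(DIM('a) - 1)"
proof -
  have ne: "bx R s t i \<noteq> {}"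
  proof -
    have "-(R *\<^sub>R One) + s *\<^sub>R i \<in> bx R s t i"
      using i R st by (auto simp: mem_bx corner_inner inner_Basis)
    then show ?thesis by blast
  qed
  have "Henstock_Kurzweil_Integration.content (bx R s t i) = (\<Prod>j\<in>Basis. (R *\<^sub>R One + t *\<^sub>R i) \<bullet> j - (-(R *\<^sub>R One) + s *\<^sub>R i) \<bullet> j)"
    using ne unfolding bx_def by (simp add: content_cbox_if)
  also have "\<dots> = (\<Prod>j\<in>Basis. 2*R + (t - s) * (i \<bullet> j))"
    by (rule prod.cong) (auto simp: corner_inner algebra_simps)
  also have "\<dots> = (2*R + (t - s) * (i \<bullet> i)) * (\<Prod>j\<in>Basis - {i}. 2*R + (t - s) * (i \<bullet> j))"
    using i by (simp add: prod.remove)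
  also have "(\<Prod>j\<in>Basis - {i}. 2*R + (t - s) * (i \<bullet> j)) = (\<Prod>j\<in>Basis - {i}. 2*R)"
    by (rule prod.cong) (use i in \<open>auto simp: inner_Basis\<close>)
  also have "\<dots> = (2*R)^(DIM('a) - 1)"
    using i by (simp add: card_Diff_singleton)
  finally show ?thesis using i by (simp add: inner_Basis)
qed

lemma int_cont_cbox: "continuous_on UNIV G \<Longrightarrow> (G::'a::euclidean_space \<Rightarrow> real) integrable_on cbox c d"
  by (rule integrable_continuous, rule continuous_on_subset) auto

lemma bound_bx:
  fixes G :: "'a::euclidean_space \<Rightarrow> real"
  assumes cG: "continuous_on UNIV G" and bnd: "\<And>x. \<bar>G x\<bar> \<le> B"
  shows "\<bar>integral (bx R s t i) G\<bar> \<le> B * Henstock_Kurzweil_Integration.content (bx R s t i)"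
proof -
  have B0: "0 \<le> B" using bnd[of 0] by linarith
  show ?thesis unfolding bx_def
    using has_integral_bound[OF B0 integrable_integral[OF int_cont_cbox[OF cG]]] bnd by auto
qed

lemma shift_integral:
  fixes G :: "'a::euclidean_space \<Rightarrow> real"
  assumes cG: "continuous_on UNIV G"
  shows "integral (bx R 0 0 i) (\<lambda>x. G (x + h *\<^sub>R i)) = integral (bx R h h i) G"
proof -
  have "((G \<circ> (+) (h *\<^sub>R i)) has_integral integral (bx R h h i) G) (cbox (-(R *\<^sub>R One)) (R *\<^sub>R One))"
    unfolding has_integral_shift_cbox_iff bx_def
    by (rule integrable_integral) (rule int_cont_cbox[OF cG])
  then show ?thesis
    unfolding bx00 by (simp add: o_def add.commute integral_unique)
qed

lemma pw_dim: "(x::real) * x ^ (DIM('a::euclidean_space) - 1) = x ^ DIM('a)"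
proof -
  have e: "Suc (DIM('a) - 1) = DIM('a)" using DIM_positive[where 'a='a] by arith
  show ?thesis using power_Suc[of x "DIM('a) - 1"] unfolding e by (rule sym)
qed

lemma content_Q:
  assumes "R > 0"
  shows "Henstock_Kurzweil_Integration.content (cbox (- (R *\<^sub>R One)) (R *\<^sub>R One) :: 'a::euclidean_space set) = (2*R)^DIM('a)"
proof -
  obtain i :: 'a where "i \<in> Basis" using nonempty_Basis by blast
  from content_bx[OF this, of R 0 0, unfolded bx00] assms
  have "Henstock_Kurzweil_Integration.content (cbox (- (R *\<^sub>R One)) (R *\<^sub>R One) :: 'a set) = (2*R + 0 - 0) * (2*R)^(DIM('a) - 1)"
    by simp
  also have "\<dots> = (2*R)^DIM('a)" by (simp only: diff_zero add_0_right pw_dim)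
  finally show ?thesis .
qed

lemma div1:
  fixes G g :: "'a::euclidean_space \<Rightarrow> real"
  assumes i: "i \<in> Basis" and R: "R > 0"
    and cG: "continuous_on UNIV G" and cg: "continuous_on UNIV g"
    and der: "\<And>x. ((\<lambda>s. G (x + s *\<^sub>R i)) has_real_derivative g x) (at 0)"
    and bnd: "\<And>x. \<bar>G x\<bar> \<le> B"
  shows "integral (bx R 0 0 i) g \<le> 2 * B * (2*R)^(DIM('a) - 1)"
proof -
  let ?n = "DIM('a)"
  let ?c = "Henstock_Kurzweil_Integration.content"
  have B0: "B \<ge> 0" using bnd[of 0] by linarith
  have step: "integral (bx R 0 0 i) (\<lambda>x. G (x + h *\<^sub>R i)) - integral (bx R 0 0 i) G \<le> 2 * B * h * (2*R)^(?n-1)"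
    if h: "0 < h" "h \<le> R" for h
  proof -
    have s1: "integral (bx R h h i) G = integral (bx R h 0 i) G + integral (bx R (2*R) h i) G"
    proof -
      have "integral (bx R h h i) G = integral (bx R h h i \<inter> {x. x \<bullet> i \<le> R}) G + integral (bx R h h i \<inter> {x. x \<bullet> i \<ge> R}) G"
        unfolding bx_def by (rule integral_split[OF int_cont_cbox[OF cG] i])
      moreover have "bx R h h i \<inter> {x. x \<bullet> i \<le> R} = bx R h 0 i"
        using i h by (auto simp: mem_bx)
      moreover have "bx R h h i \<inter> {x. x \<bullet> i \<ge> R} = bx R (2*R) h i"
        using i h R by (auto simp: mem_bx)
      ultimately show ?thesis by simp
    qed
    have s2: "integral (bx R 0 0 i) G = integral (bx R 0 (h - 2*R) i) G + integral (bx R h 0 i) G"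
    proof -
      have "integral (bx R 0 0 i) G = integral (bx R 0 0 i \<inter> {x. x \<bullet> i \<le> -R + h}) G + integral (bx R 0 0 i \<inter> {x. x \<bullet> i \<ge> -R + h}) G"
        unfolding bx_def by (rule integral_split[OF int_cont_cbox[OF cG] i])
      moreover have "bx R 0 0 i \<inter> {x. x \<bullet> i \<le> -R + h} = bx R 0 (h - 2*R) i"
        using i h by (auto simp: mem_bx)
      moreover have "bx R 0 0 i \<inter> {x. x \<bullet> i \<ge> -R + h} = bx R h 0 i"
        using i h R by (auto simp: mem_bx)
      ultimately show ?thesis by simp
    qed
    have b1: "\<bar>integral (bx R (2*R) h i) G\<bar> \<le> B * (h * (2*R)^(?n-1))"
      using bound_bx[OF cG bnd, of R "2*R" h i] content_bx[OF i, of R h "2*R"] R h by simp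
    have b2: "\<bar>integral (bx R 0 (h - 2*R) i) G\<bar> \<le> B * (h * (2*R)^(?n-1))"
      using bound_bx[OF cG bnd, of R 0 "h - 2*R" i] content_bx[OF i, of R "h - 2*R" 0] R h by simp
    show ?thesis
      unfolding shift_integral[OF cG] s1 s2 using b1 b2 by (simp add: algebra_simps)
  qed
  define K where "K = bx (2*R) 0 0 i"
  have uc: "uniformly_continuous_on K g"
    unfolding K_def bx_def
    by (rule compact_uniformly_continuous[OF continuous_on_subset[OF cg] compact_cbox]) auto
  have approx: "\<exists>h>0. h \<le> R \<and> (\<forall>x\<in>bx R 0 0 i. \<bar>(G (x + h *\<^sub>R i) - G x) / h - g x\<bar> \<le> e)"
    if e: "e > 0" for e
  proof -
    obtain d where d: "d > 0" and dd: "\<And>x x'. x \<in> K \<Longrightarrow> x' \<in> K \<Longrightarrow> dist x' x < d \<Longrightarrow> dist (g x') (g x) < e"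
      using uc e unfolding uniformly_continuous_on_def by metis
    define h where "h = min R (d/2)"
    have h0: "h > 0" "h \<le> R" "h < d" using R d by (auto simp: h_def)
    have "\<bar>(G (x + h *\<^sub>R i) - G x) / h - g x\<bar> \<le> e" if x: "x \<in> bx R 0 0 i" for x
    proof -
      have dd': "((\<lambda>s. G (x + s *\<^sub>R i)) has_real_derivative g (x + s *\<^sub>R i)) (at s)" for s
      proof -
        have "((\<lambda>t. G (x + s *\<^sub>R i + t *\<^sub>R i)) has_real_derivative g (x + s *\<^sub>R i)) (at 0)"
          by (rule der)
        moreover have "(\<lambda>t. G (x + s *\<^sub>R i + t *\<^sub>R i)) = (\<lambda>t. G (x + (t + s) *\<^sub>R i))"
          by (rule ext) (simp add: algebra_simps)
        ultimately show ?thesis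
          using DERIV_shift[of "\<lambda>s. G (x + s *\<^sub>R i)" "g (x + s *\<^sub>R i)" 0 s] by simp
      qed
      obtain z where z: "0 < z" "z < h" "G (x + h *\<^sub>R i) - G (x + 0 *\<^sub>R i) = (h - 0) * g (x + z *\<^sub>R i)"
        using MVT2[OF h0(1), of "\<lambda>s. G (x + s *\<^sub>R i)" "\<lambda>s. g (x + s *\<^sub>R i)"] dd' by blast
      have eq: "(G (x + h *\<^sub>R i) - G x) / h = g (x + z *\<^sub>R i)"
        using z h0 by simp
      have xK: "x \<in> K" using x i R unfolding K_def by (auto simp: mem_bx)
      have xzK: "x + z *\<^sub>R i \<in> K" using x i R z h0 unfolding K_def
        by (auto simp: mem_bx inner_add_left inner_Basis)
      have "dist (x + z *\<^sub>R i) x < d" using z h0 i by (simp add: dist_norm)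
      then have "dist (g (x + z *\<^sub>R i)) (g x) < e" using dd xK xzK by blast
      then show ?thesis unfolding eq by (simp add: dist_real_def)
    qed
    then show ?thesis using h0 by blast
  qed
  have main: "integral (bx R 0 0 i) g \<le> 2 * B * (2*R)^(?n-1) + e * (2*R)^?n" if e: "e > 0" for e
  proof -
    obtain h where h: "h > 0" "h \<le> R" and hb: "\<And>x. x \<in> bx R 0 0 i \<Longrightarrow> \<bar>(G (x + h *\<^sub>R i) - G x) / h - g x\<bar> \<le> e"
      using approx[OF e] by blast
    have cGs: "continuous_on UNIV (\<lambda>x. G (x + h *\<^sub>R i))"
      by (intro continuous_on_compose2[OF cG] continuous_intros) auto
    have "integral (bx R 0 0 i) g \<le> integral (bx R 0 0 i) (\<lambda>x. (G (x + h *\<^sub>R i) - G x) / h + e)"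
      unfolding bx00
    proof (rule integral_le)
      show "g integrable_on cbox (- (R *\<^sub>R One)) (R *\<^sub>R One)" by (rule int_cont_cbox[OF cg])
      show "(\<lambda>x. (G (x + h *\<^sub>R i) - G x) / h + e) integrable_on cbox (- (R *\<^sub>R One)) (R *\<^sub>R One)"
        using h by (intro int_cont_cbox continuous_intros cGs cG) auto
      fix x :: 'a assume "x \<in> cbox (- (R *\<^sub>R One)) (R *\<^sub>R One)"
      then have "\<bar>(G (x + h *\<^sub>R i) - G x) / h - g x\<bar> \<le> e" using hb unfolding bx00 by blast
      then show "g x \<le> (G (x + h *\<^sub>R i) - G x) / h + e" by linarith
    qed
    also have "\<dots> = (integral (bx R 0 0 i) (\<lambda>x. G (x + h *\<^sub>R i)) - integral (bx R 0 0 i) G) / h + e * (2*R)^?n"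
    proof -
      let ?Q = "cbox (- (R *\<^sub>R One)) (R *\<^sub>R One) :: 'a set"
      have iA: "(\<lambda>x. (G (x + h *\<^sub>R i) - G x) / h) integrable_on ?Q"
        using h by (intro int_cont_cbox continuous_intros cGs cG) auto
      have "integral ?Q (\<lambda>x. (G (x + h *\<^sub>R i) - G x) / h + e) = integral ?Q (\<lambda>x. (G (x + h *\<^sub>R i) - G x) / h) + integral ?Q (\<lambda>x. e)"
        by (rule integral_add[OF iA]) (rule integrable_const)
      also have "integral ?Q (\<lambda>x. (G (x + h *\<^sub>R i) - G x) / h) = (integral ?Q (\<lambda>x. G (x + h *\<^sub>R i)) - integral ?Q G) / h"
        unfolding integral_divide by (subst integral_diff) (auto intro: int_cont_cbox cGs cG)
      also have "integral ?Q (\<lambda>x. e) = e * (2*R)^?n"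
        by (simp only: integral_const content_Q[OF R] real_scaleR_def mult.commute)
      finally show ?thesis unfolding bx00 .
    qed
    also have "\<dots> \<le> 2 * B * (2*R)^(?n-1) + e * (2*R)^?n"
    proof -
      have "(integral (bx R 0 0 i) (\<lambda>x. G (x + h *\<^sub>R i)) - integral (bx R 0 0 i) G) / h \<le> 2 * B * (2*R)^(?n-1)"
        using step[OF h] h(1) by (simp add: pos_divide_le_eq mult_ac)
      then show ?thesis by linarith
    qed
    finally show ?thesis .
  qed
  show ?thesis
  proof (rule field_le_epsilon)
    fix e :: real assume e: "e > 0"
    have p: "(2*R)^?n > 0" using R by simp
    show "integral (bx R 0 0 i) g \<le> 2 * B * (2*R)^(?n-1) + e"
    proof -
      have Rn: "R \<noteq> 0" using R by simp
      show ?thesis using main[of "e / (2*R)^?n"] e p Rn by simp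
    qed
  qed
qed

lemma flux:
  fixes F :: "'a::euclidean_space \<Rightarrow> 'a"
  assumes F: "C1 F F'" and R: "R > 0" and bnd: "\<And>x. norm (F x) \<le> B"
  shows "integral (cbox (-(R *\<^sub>R One)) (R *\<^sub>R One)) (\<lambda>x. \<Sum>i\<in>Basis. F' x i \<bullet> i)
           \<le> real DIM('a) * (2 * B * (2*R)^(DIM('a) - 1))"
proof -
  have each: "integral (bx R 0 0 i) (\<lambda>x. F' x i \<bullet> i) \<le> 2 * B * (2*R)^(DIM('a)-1)" if i: "i \<in> Basis" for i
  proof (rule div1[OF i R])
    show "continuous_on UNIV (\<lambda>x. F x \<bullet> i)" by (intro continuous_intros C1_cont[OF F])
    show "continuous_on UNIV (\<lambda>x. F' x i \<bullet> i)" by (intro continuous_intros C1_dcont[OF F])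
    show "\<bar>F x \<bullet> i\<bar> \<le> B" for x using Basis_le_norm[OF i, of "F x"] bnd[of x] by linarith
    show "((\<lambda>s. F (x + s *\<^sub>R i) \<bullet> i) has_real_derivative F' x i \<bullet> i) (at 0)" for x
    proof -
      have l: "((\<lambda>s. x + s *\<^sub>R i) has_derivative (\<lambda>s. s *\<^sub>R i)) (at 0)"
        by (auto intro!: derivative_eq_intros)
      have d: "(F has_derivative F' x) (at ((\<lambda>s. x + s *\<^sub>R i) 0))"
        using C1_der[OF F, of x] by simp
      have "((\<lambda>s. F (x + s *\<^sub>R i)) has_derivative (\<lambda>s. F' x (s *\<^sub>R i))) (at 0)"
        using has_derivative_compose[OF l d] by simp
      then have "((\<lambda>s. F (x + s *\<^sub>R i) \<bullet> i) has_derivative (\<lambda>s. F' x (s *\<^sub>R i) \<bullet> i)) (at 0)"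
        by (rule bounded_linear.has_derivative[OF bounded_linear_inner_left])
      moreover have "(\<lambda>s. F' x (s *\<^sub>R i) \<bullet> i) = (*) (F' x i \<bullet> i)"
        using linear_cmul[OF has_derivative_linear[OF C1_der[OF F, of x]]] by (auto simp: fun_eq_iff)
      ultimately show ?thesis unfolding has_field_derivative_def by simp
    qed
  qed
  have "integral (cbox (-(R *\<^sub>R One)) (R *\<^sub>R One)) (\<lambda>x. \<Sum>i\<in>Basis. F' x i \<bullet> i)
      = (\<Sum>i\<in>Basis. integral (cbox (-(R *\<^sub>R One)) (R *\<^sub>R One)) (\<lambda>x. F' x i \<bullet> i))"
    by (rule integral_sum) (auto intro!: int_cont_cbox continuous_intros C1_dcont[OF F])
  also have "\<dots> \<le> (\<Sum>i\<in>(Basis::'a set). 2 * B * (2*R)^(DIM('a)-1))"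
    by (rule sum_mono) (use each in \<open>simp add: bx00\<close>)
  also have "\<dots> = real DIM('a) * (2 * B * (2*R)^(DIM('a) - 1))" by simp
  finally show ?thesis .
qed

lemma smooth_C1:
  fixes u :: "'a::euclidean_space \<Rightarrow> real"
  assumes "smooth_fun u"
  shows "C1 u (\<lambda>x. frechet_derivative u (at x))"
    and "\<exists>v'. C1 (grad u) v'"
    and "frechet_derivative u (at x) h = grad u x \<bullet> h"
proof -
  have c2: "C_k (Suc (Suc 0)) u" using assms unfolding smooth_fun_def by blast
  then have du: "u differentiable_on UNIV"
    and p: "\<And>i. i \<in> Basis \<Longrightarrow> C_k (Suc 0) (\<lambda>x. frechet_derivative u (at x) i)" by auto
  have pc: "continuous_on UNIV (\<lambda>x. frechet_derivative u (at x) i)" if "i\<in>Basis" for i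
    using p[OF that] by simp
  show C1u: "C1 u (\<lambda>x. frechet_derivative u (at x))" by (rule C1_frechet[OF du pc])
  have C1p: "C1 (\<lambda>x. frechet_derivative u (at x) i) (\<lambda>x. frechet_derivative (\<lambda>x. frechet_derivative u (at x) i) (at x))"
    if i: "i\<in>Basis" for i
    using p[OF i] by (intro C1_frechet) auto
  have eq: "grad u = (\<lambda>x. \<Sum>i\<in>Basis. frechet_derivative u (at x) i *\<^sub>R i)"
    by (rule ext) (simp add: grad_def)
  have "C1 (\<lambda>x. \<Sum>i\<in>Basis. frechet_derivative u (at x) i *\<^sub>R i)
          (\<lambda>x h. \<Sum>i\<in>Basis. frechet_derivative (\<lambda>x. frechet_derivative u (at x) i) (at x) h *\<^sub>R i)"
    by (rule C1_sum[OF finite_Basis]) (rule C1_scaleR_const[OF C1p])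
  then show "\<exists>v'. C1 (grad u) v'" unfolding eq by blast
  have "frechet_derivative u (at x) h = (\<Sum>j\<in>Basis. (h \<bullet> j) * frechet_derivative u (at x) j)"
    by (rule linear_expand[OF has_derivative_linear[OF C1_der[OF C1u]]])
  also have "\<dots> = grad u x \<bullet> h"
    unfolding grad_def inner_sum_left by (rule sum.cong) (auto simp: inner_commute)
  finally show "frechet_derivative u (at x) h = grad u x \<bullet> h" .
qed

lemma Wineq:
  fixes p c e :: real
  assumes p: "p \<ge> 0" and c: "c \<ge> 1/2" and e: "e \<ge> 0"
  shows "sqrt (1+p) \<le> 1 + 2 * (c * (p / sqrt (1+p)) + e)"
proof -
  define W where "W = sqrt (1+p)"
  have W1: "W \<ge> 1" using p by (simp add: W_def)
  have WW: "W * W = 1 + p" using p by (simp add: W_def)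
  have "W - 1 \<le> p / W"
  proof -
    have "(W - 1) * W \<le> p" using WW W1 by (simp add: algebra_simps)
    then show ?thesis using W1 by (simp add: pos_le_divide_eq)
  qed
  moreover have "p / W \<le> 2 * c * (p / W)"
  proof -
    have "p \<le> 2 * c * p" using mult_right_mono[of 1 "2*c" p] c p by simp
    then have "p / W \<le> (2 * c * p) / W" using W1 by (intro divide_right_mono) auto
    then show ?thesis by simp
  qed
  ultimately show ?thesis using e unfolding W_def[symmetric] by (simp add: algebra_simps)
qed

lemma phi_deriv: "0 \<le> t \<Longrightarrow> ((\<lambda>t::real. 1 / sqrt (1 + t)) has_real_derivative -(1 / (2 * sqrt (1+t) * (1+t)))) (at t)"
  apply (rule derivative_eq_intros refl | simp)+
  apply (simp add: field_simps)
  done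

theorem theorem5:
  fixes u :: "'a::euclidean_space \<Rightarrow> real"
  assumes smooth: "smooth_fun u"
    and H_nonpos: "\<forall>x. mean_curv u x \<le> 0"
  shows "(\<exists>C>0. \<forall>R>0. graph_vol u (ball 0 R) \<le> ennreal (C * R ^ DIM('a)))
       \<and> (\<forall>a :: 'a \<times> real. norm a = 1 \<longrightarrow>
            (\<forall>x. mean_curv u x = graph_normal u x \<bullet> a) \<longrightarrow>
            (\<not> bdd_below ((\<lambda>X. X \<bullet> a) ` graph u) \<or> \<not> bdd_above ((\<lambda>X. X \<bullet> a) ` graph u)))"
proof -
  let ?n = "DIM('a)"
  define v where "v = grad u"
  have C1u: "C1 u (\<lambda>x. frechet_derivative u (at x))" using smooth_C1(1)[OF smooth] .
  obtain v' where C1v: "C1 v v'" using smooth_C1(2)[OF smooth] unfolding v_def by blast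
  have Du: "frechet_derivative u (at x) h = v x \<bullet> h" for x h
    using smooth_C1(3)[OF smooth] unfolding v_def .
  define W where "W = (\<lambda>x. sqrt (1 + (norm (v x))\<^sup>2))"
  define X where "X = (\<lambda>y. (1 / sqrt (1 + (norm (v y))\<^sup>2)) *\<^sub>R v y)"
  have Xv: "X x = (1 / W x) *\<^sub>R v x" for x by (simp add: X_def W_def)
  have W1: "W x \<ge> 1" for x by (simp add: W_def)
  have W0: "W x > 0" for x using W1[of x] by linarith
  have WW: "W x * W x = 1 + (norm (v x))\<^sup>2" for x by (simp add: W_def)
  have C1s: "C1 (\<lambda>x. (norm (v x))\<^sup>2) (\<lambda>x h. v x \<bullet> v' x h + v' x h \<bullet> v x)"
    using C1_inner[OF C1v C1v] by (simp add: power2_norm_eq_inner)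
  define \<phi>d where "\<phi>d = (\<lambda>t::real. -(1 / (2 * sqrt (1+t) * (1+t))))"
  have C1phi: "C1 (\<lambda>x. 1 / sqrt (1 + (norm (v x))\<^sup>2)) (\<lambda>x h. \<phi>d ((norm (v x))\<^sup>2) * (v x \<bullet> v' x h + v' x h \<bullet> v x))"
  proof (rule C1_comp[OF C1s])
    show "((\<lambda>t. 1 / sqrt (1 + t)) has_real_derivative \<phi>d ((norm (v x))\<^sup>2)) (at ((norm (v x))\<^sup>2))" for x
    proof -
      have "0 \<le> (norm (v x))\<^sup>2" by simp
      then show ?thesis unfolding \<phi>d_def by (rule phi_deriv)
    qed
    have "continuous_on UNIV (\<lambda>x. \<phi>d ((norm (v x))\<^sup>2))" unfolding \<phi>d_def
      by (intro continuous_intros C1_cont[OF C1v]) (auto simp: add_nonneg_eq_0_iff)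
    then show "continuous_on UNIV (\<lambda>x. \<phi>d ((norm (v x))\<^sup>2))" .
  qed
  obtain X' where C1X: "C1 X X'"
    using C1_scaleR[OF C1phi C1v] unfolding X_def by blast
  define dX where "dX x = (\<Sum>i\<in>Basis. X' x i \<bullet> i)" for x
  have mc: "mean_curv u x = - dX x" for x
  proof -
    have "mean_curv u x = - divergence X x" unfolding mean_curv_def X_def v_def ..
    also have "divergence X x = dX x"
      unfolding divergence_def dX_def frechet_derivative_at[OF C1_der[OF C1X, of x], symmetric] ..
    finally show ?thesis .
  qed
  have dX0: "dX x \<ge> 0" for x using H_nonpos[rule_format, of x] mc[of x] by linarith
  have cX: "continuous_on UNIV X" by (rule C1_cont[OF C1X])
  have cv: "continuous_on UNIV v" by (rule C1_cont[OF C1v])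
  have cdX: "continuous_on UNIV dX"
    unfolding dX_def by (intro continuous_on_sum continuous_intros C1_dcont[OF C1X])
  have cW: "continuous_on UNIV W" unfolding W_def by (intro continuous_intros cv)
  have normX: "norm (X x) \<le> 1" for x
  proof -
    have "norm (v x) \<le> W x" unfolding W_def by (rule real_le_rsqrt) simp
    then show ?thesis using W0[of x] by (simp add: Xv divide_le_eq_1)
  qed
  have vX: "v x \<bullet> X x = (norm (v x))\<^sup>2 / W x" for x
    by (simp add: Xv power2_norm_eq_inner)
  have fluxpsi: "integral (cbox (-(R *\<^sub>R One)) (R *\<^sub>R One)) (\<lambda>x. \<psi>' x (X x) + \<psi> x * dX x) \<le> real ?n * (2 * B * (2*R)^(?n - 1))
     \<and> continuous_on UNIV (\<lambda>x. \<psi>' x (X x) + \<psi> x * dX x)"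
    if psi: "C1 \<psi> \<psi>'" and bnd: "\<And>x. \<bar>\<psi> x\<bar> \<le> B" and R: "R > 0" for \<psi> \<psi>' B R
  proof -
    have C1F: "C1 (\<lambda>x. \<psi> x *\<^sub>R X x) (\<lambda>x h. \<psi> x *\<^sub>R X' x h + \<psi>' x h *\<^sub>R X x)"
      by (rule C1_scaleR[OF psi C1X])
    have nb: "norm (\<psi> x *\<^sub>R X x) \<le> B" for x
    proof -
      have "norm (\<psi> x *\<^sub>R X x) = \<bar>\<psi> x\<bar> * norm (X x)" by simp
      also have "\<dots> \<le> B * 1" using bnd[of 0] by (intro mult_mono[OF bnd normX]) auto
      finally show ?thesis by simp
    qed
    have eq: "(\<Sum>i\<in>Basis. (\<psi> x *\<^sub>R X' x i + \<psi>' x i *\<^sub>R X x) \<bullet> i) = \<psi>' x (X x) + \<psi> x * dX x" for x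
    proof -
      have "\<psi>' x (X x) = (\<Sum>j\<in>Basis. (X x \<bullet> j) * \<psi>' x j)"
        by (rule linear_expand[OF has_derivative_linear[OF C1_der[OF psi]]])
      then show ?thesis unfolding dX_def
        by (simp add: inner_add_left sum.distrib sum_distrib_left mult.commute)
    qed
    have c: "continuous_on UNIV (\<lambda>x. \<Sum>i\<in>Basis. (\<psi> x *\<^sub>R X' x i + \<psi>' x i *\<^sub>R X x) \<bullet> i)"
      by (intro continuous_on_sum continuous_intros C1_dcont[OF C1F])
    show ?thesis using flux[OF C1F R nb] c unfolding eq by simp
  qed
  have part1: "\<exists>C>0. \<forall>R>0. graph_vol u (ball 0 R) \<le> ennreal (C * R ^ ?n)"
  proof (intro exI[of _ "2^?n * (1 + 2 * real ?n * pi)"] conjI allI impI)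
    show "0 < 2^?n * (1 + 2 * real ?n * pi)" by (simp add: add_pos_nonneg)
    fix R :: real assume R: "R > 0"
    let ?Q = "cbox (-(R *\<^sub>R One)) (R *\<^sub>R One) :: 'a set"
    define \<phi>1 where "\<phi>1 = (\<lambda>t. R * (arctan (t / R) + pi/2))"
    define \<phi>1d where "\<phi>1d = (\<lambda>t. inverse (1 + (t/R)^2))"
    have C1psi: "C1 (\<lambda>x. \<phi>1 (u x)) (\<lambda>x h. \<phi>1d (u x) * frechet_derivative u (at x) h)"
    proof (rule C1_comp[OF C1u])
      show "(\<phi>1 has_real_derivative \<phi>1d (u x)) (at (u x))" for x
        unfolding \<phi>1_def \<phi>1d_def using R
        by (rule_tac derivative_eq_intros refl | simp)+
      have "continuous_on UNIV (\<lambda>x. inverse (1 + (u x / R)^2))"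
        by (intro continuous_intros C1_cont[OF C1u]) (use R in \<open>auto simp: add_nonneg_eq_0_iff\<close>)
      then show "continuous_on UNIV (\<lambda>x. \<phi>1d (u x))" unfolding \<phi>1d_def .
    qed
    have psi0: "\<phi>1 (u x) \<ge> 0" and psib: "\<bar>\<phi>1 (u x)\<bar> \<le> pi * R" for x
    proof -
      have a1: "0 < arctan (u x / R) + pi/2" using arctan_lbound[of "u x / R"] by linarith
      have a2: "arctan (u x / R) + pi/2 < pi" using arctan_ubound[of "u x / R"] by linarith
      show "\<phi>1 (u x) \<ge> 0" unfolding \<phi>1_def using a1 R by simp
      have "\<phi>1 (u x) \<le> R * pi" unfolding \<phi>1_def using a2 R by (intro mult_left_mono) auto
      then show "\<bar>\<phi>1 (u x)\<bar> \<le> pi * R" using \<open>\<phi>1 (u x) \<ge> 0\<close> by (simp add: mult.commute)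
    qed
    define g where "g x = \<phi>1d (u x) * frechet_derivative u (at x) (X x) + \<phi>1 (u x) * dX x" for x
    have fl: "integral ?Q g \<le> real ?n * (2 * (pi * R) * (2*R)^(?n - 1))" and cg: "continuous_on UNIV g"
      using fluxpsi[OF C1psi psib R] unfolding g_def by auto
    have g0: "g x \<ge> 0" for x
    proof -
      have "\<phi>1d (u x) \<ge> 0" unfolding \<phi>1d_def by simp
      moreover have "frechet_derivative u (at x) (X x) \<ge> 0" unfolding Du vX using W0[of x] by simp
      ultimately show ?thesis unfolding g_def using psi0[of x] dX0[of x] by simp
    qed
    define f where "f x = 1 + 2 * g x" for x
    have cf: "continuous_on UNIV f" unfolding f_def by (intro continuous_intros cg)
    have intf: "(f has_integral integral ?Q f) ?Q" by (rule integrable_integral[OF int_cont_cbox[OF cf]])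
    have If: "integral ?Q f \<le> 2^?n * (1 + 2 * real ?n * pi) * R ^ ?n"
    proof -
      have "integral ?Q f = integral ?Q (\<lambda>x. 1) + integral ?Q (\<lambda>x. 2 * g x)"
        unfolding f_def by (rule integral_add) (auto intro!: int_cont_cbox continuous_intros cg)
      also have "integral ?Q (\<lambda>x. 2 * g x) = 2 * integral ?Q g" by (rule integral_mult_right)
      also have "integral ?Q (\<lambda>x. 1) = (2*R)^?n" using content_Q[OF R, where 'a='a] by simp
      finally have "integral ?Q f = (2*R)^?n + 2 * integral ?Q g" .
      also have "\<dots> \<le> (2*R)^?n + 2 * (real ?n * (2 * (pi * R) * (2*R)^(?n - 1)))" using fl by linarith
      also have "2 * (pi * R) * (2*R)^(?n - 1) = pi * ((2*R) * (2*R)^(?n - 1))" by (simp add: algebra_simps)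
      also have "(2*R) * (2*R)^(?n - 1) = (2*R)^?n" by (rule pw_dim)
      also have "(2*R)^?n + 2 * (real ?n * (pi * (2*R)^?n)) = 2^?n * (1 + 2 * real ?n * pi) * R ^ ?n"
        by (simp add: power_mult_distrib algebra_simps)
      finally show ?thesis .
    qed
    have pt: "indicator {x. (x, u x) \<in> ball 0 R} x * ennreal (sqrt (1 + (norm (grad u x))\<^sup>2))
              \<le> ennreal (indicator ?Q x * f x)" for x
    proof (cases "(x, u x) \<in> ball 0 R")
      case False then show ?thesis by simp
    next
      case True
      then have nr: "norm (x, u x) < R" by simp
      have nx: "norm x < R" using norm_fst_le[of x "u x"] nr by simp
      have nu: "\<bar>u x\<bar> < R" using norm_snd_le[of "u x" x] nr by simp
      have xQ: "x \<in> ?Q" unfolding mem_box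
        using Basis_le_norm[of _ x] nx by (auto simp: inner_sum_Basis abs_le_iff) (smt (verit))+
      have c: "\<phi>1d (u x) \<ge> 1/2"
      proof -
        have "\<bar>u x / R\<bar> < 1" using nu R by simp
        then have "(u x / R)^2 < 1" by (simp add: abs_square_less_1)
        then have "1 + (u x / R)^2 \<le> 2" by simp
        moreover have "0 < 1 + (u x / R)^2" by (simp add: add_pos_nonneg)
        ultimately have "inverse 2 \<le> inverse (1 + (u x / R)^2)" by (rule le_imp_inverse_le)
        then show ?thesis unfolding \<phi>1d_def by (simp add: inverse_eq_divide)
      qed
      have "W x \<le> f x"
      proof -
        have "f x = 1 + 2 * (\<phi>1d (u x) * ((norm (v x))\<^sup>2 / W x) + \<phi>1 (u x) * dX x)"
          unfolding f_def g_def Du vX ..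
        moreover have "W x \<le> 1 + 2 * (\<phi>1d (u x) * ((norm (v x))\<^sup>2 / W x) + \<phi>1 (u x) * dX x)"
          unfolding W_def by (rule Wineq[OF _ c]) (use psi0[of x] dX0[of x] in auto)
        ultimately show ?thesis by simp
      qed
      then show ?thesis using True xQ by (simp add: W_def v_def ennreal_leI)
    qed
    have "graph_vol u (ball 0 R) \<le> (\<integral>\<^sup>+ x. ennreal (indicator ?Q x * f x) \<partial>lborel)"
      unfolding graph_vol_def by (rule nn_integral_mono) (rule pt)
    also have "\<dots> = ennreal (integral ?Q f)"
      by (rule nn_integral_has_integral_lebesgue[OF _ intf]) (simp add: f_def g0 add_nonneg_nonneg)
    also have "\<dots> \<le> ennreal (2^?n * (1 + 2 * real ?n * pi) * R ^ ?n)" by (rule ennreal_leI[OF If])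
    finally show "graph_vol u (ball 0 R) \<le> ennreal (2^?n * (1 + 2 * real ?n * pi) * R ^ ?n)" .
  qed
  have part2: "\<forall>a :: 'a \<times> real. norm a = 1 \<longrightarrow>
            (\<forall>x. mean_curv u x = graph_normal u x \<bullet> a) \<longrightarrow>
            (\<not> bdd_below ((\<lambda>X. X \<bullet> a) ` graph u) \<or> \<not> bdd_above ((\<lambda>X. X \<bullet> a) ` graph u))"
  proof (intro allI impI)
    fix a :: "'a \<times> real" assume na: "norm a = 1" and tr: "\<forall>x. mean_curv u x = graph_normal u x \<bullet> a"
    obtain a' c where a: "a = (a', c)" by (cases a)
    show "\<not> bdd_below ((\<lambda>X. X \<bullet> a) ` graph u) \<or> \<not> bdd_above ((\<lambda>X. X \<bullet> a) ` graph u)"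
    proof (rule ccontr)
      assume "\<not> ?thesis"
      then have bb: "bdd_below ((\<lambda>X. X \<bullet> a) ` graph u)" "bdd_above ((\<lambda>X. X \<bullet> a) ` graph u)" by auto
      define w where "w x = x \<bullet> a' + u x * c" for x
      have wimg: "w x \<in> (\<lambda>X. X \<bullet> a) ` graph u" for x
        unfolding w_def graph_def a by (rule image_eqI[of _ _ "(x, u x)"]) auto
      obtain m where m: "\<And>y. y \<in> (\<lambda>X. X \<bullet> a) ` graph u \<Longrightarrow> m \<le> y"
        using bb(1) unfolding bdd_below_def by blast
      obtain M where M: "\<And>y. y \<in> (\<lambda>X. X \<bullet> a) ` graph u \<Longrightarrow> y \<le> M"
        using bb(2) unfolding bdd_above_def by blast
      define K where "K = max \<bar>m\<bar> \<bar>M\<bar>"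
      have wK: "\<bar>w x\<bar> \<le> K" for x using m[OF wimg[of x]] M[OF wimg[of x]] unfolding K_def by auto
      have K0: "K \<ge> 0" unfolding K_def by simp
      show False
      proof (cases "c = 0")
        case True
        then have "norm a' = 1" using na a by (simp add: norm_Pair)
        then have "a' \<bullet> a' = 1" by (simp add: power2_norm_eq_inner[symmetric])
        then have "w ((K+1) *\<^sub>R a') = K + 1" unfolding w_def using True by simp
        then show False using wK[of "(K+1) *\<^sub>R a'"] K0 by simp
      next
        case False
        define w' where "w' x h = h \<bullet> a' + frechet_derivative u (at x) h * c" for x h
        have C1w: "C1 w w'"
        proof -
          have "C1 (\<lambda>x. x \<bullet> a' + u x *\<^sub>R c) (\<lambda>x h. h \<bullet> a' + frechet_derivative u (at x) h *\<^sub>R c)"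
            by (rule C1_add[OF C1_inner_const C1_scaleR_const[OF C1u]])
          then show ?thesis unfolding w_def[abs_def] w'_def[abs_def] by simp
        qed
        have key: "w' x (X x) = dX x + c * W x" for x
        proof -
          have gn: "graph_normal u x \<bullet> a = (1 / W x) * (- (v x \<bullet> a')) + (1 / W x) * c"
            unfolding graph_normal_def a W_def v_def by (simp add: inner_Pair)
          have "dX x = (1 / W x) * (v x \<bullet> a') - (1 / W x) * c"
            using tr[rule_format, of x] mc[of x] gn by simp
          moreover have "w' x (X x) = (1 / W x) * (v x \<bullet> a') + ((norm (v x))\<^sup>2 / W x) * c"
            unfolding w'_def Du vX by (simp add: Xv inner_commute)
          moreover have "c * W x = (1 / W x) * c + ((norm (v x))\<^sup>2 / W x) * c"
            using WW[of x] W0[of x] by (simp add: field_simps)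
          ultimately show ?thesis by simp
        qed
        obtain \<psi> \<psi>' where psi: "C1 \<psi> \<psi>'" "\<And>x. \<bar>\<psi> x\<bar> \<le> 2*K+1"
          "\<And>x. \<bar>c\<bar> * W x \<le> \<psi>' x (X x) + \<psi> x * dX x"
        proof (cases "c > 0")
          case True
          have C1p: "C1 (\<lambda>x. w x + K) (\<lambda>x h. w' x h + 0)" by (rule C1_add[OF C1w C1_const])
          show ?thesis
          proof (rule that[OF C1p])
            show "\<bar>w x + K\<bar> \<le> 2*K+1" for x using wK[of x] by auto
            show "\<bar>c\<bar> * W x \<le> w' x (X x) + 0 + (w x + K) * dX x" for x
            proof -
              have "0 \<le> (w x + K) * dX x" using wK[of x] dX0[of x] by (intro mult_nonneg_nonneg) auto
              then show ?thesis using key[of x] dX0[of x] True by simp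
            qed
          qed
        next
          case False
          then have cn: "c < 0" using \<open>c \<noteq> 0\<close> by simp
          have C1p: "C1 (\<lambda>x. (K+1) + - w x) (\<lambda>x h. 0 + - w' x h)"
            by (rule C1_add[OF C1_const C1_uminus[OF C1w]])
          show ?thesis
          proof (rule that[OF C1p])
            show "\<bar>(K+1) + - w x\<bar> \<le> 2*K+1" for x using wK[of x] by auto
            show "\<bar>c\<bar> * W x \<le> 0 + - w' x (X x) + ((K+1) + - w x) * dX x" for x
            proof -
              have "0 \<le> (K - w x) * dX x" using wK[of x] dX0[of x] by (intro mult_nonneg_nonneg) auto
              then show ?thesis using key[of x] cn by (simp add: algebra_simps)
            qed
          qed
        qed
        define L where "L = real ?n * (2 * (2*K+1))"
        have L0: "L \<ge> 0" unfolding L_def using K0 by simp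
        have ineq: "\<bar>c\<bar> * (2*R) \<le> L" if R: "R > 0" for R
        proof -
          let ?Q = "cbox (-(R *\<^sub>R One)) (R *\<^sub>R One) :: 'a set"
          have fb: "integral ?Q (\<lambda>x. \<psi>' x (X x) + \<psi> x * dX x) \<le> real ?n * (2 * (2*K+1) * (2*R)^(?n - 1))"
            and ci: "continuous_on UNIV (\<lambda>x. \<psi>' x (X x) + \<psi> x * dX x)"
            using fluxpsi[OF psi(1) psi(2) R] by auto
          have "(2*R)^?n = integral ?Q (\<lambda>x. 1)" using content_Q[OF R, where 'a='a] by simp
          also have "\<dots> \<le> integral ?Q W"
            by (rule integral_le) (auto intro!: int_cont_cbox cW W1)
          finally have "\<bar>c\<bar> * (2*R)^?n \<le> \<bar>c\<bar> * integral ?Q W" by (simp add: mult_left_mono)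
          also have "\<dots> = integral ?Q (\<lambda>x. \<bar>c\<bar> * W x)" by (simp add: integral_mult_right)
          also have "\<dots> \<le> integral ?Q (\<lambda>x. \<psi>' x (X x) + \<psi> x * dX x)"
            by (rule integral_le) (auto intro!: int_cont_cbox cW ci continuous_intros psi(3))
          also have "\<dots> \<le> L * (2*R)^(?n - 1)" using fb unfolding L_def by (simp add: mult_ac)
          finally have h: "\<bar>c\<bar> * (2*R)^?n \<le> L * (2*R)^(?n - 1)" .
          have e: "(2*R)^?n = (2*R) * (2*R)^(?n - 1)" by (rule pw_dim[symmetric])
          have "(\<bar>c\<bar> * (2*R)) * (2*R)^(?n - 1) \<le> L * (2*R)^(?n - 1)"
            using h unfolding e by (simp only: mult.assoc)
          moreover have "(2*R)^(?n - 1) > 0" using R by simp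
          ultimately show ?thesis by (rule mult_right_le_imp_le)
        qed
        have cpos: "\<bar>c\<bar> > 0" using False by simp
        have "\<bar>c\<bar> * (2 * ((L + 1) / (2 * \<bar>c\<bar>))) \<le> L"
          by (rule ineq) (use L0 cpos in simp)
        then show False using cpos by simp
      qed
    qed
  qed
  show ?thesis using part1 part2 by blast
qed

end
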